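(* Let $\mathfrak{L}_2(\alpha_1,\beta_1,\gamma_1,\alpha_2,\beta_2,\gamma_2):=P(Y(\alpha_1,\beta_1,\gamma_1),Z(\alpha_2,\beta_2,\gamma_2))$ for $(\alpha_i,\beta_i,\gamma_i)\in(-\pi,\pi]\times(0,\pi)\times(-\pi,\pi]$, $i=1,2$ (this function does not depend on $\alpha_2$, so regard it as a function of $(\alpha_1,\beta_1,\gamma_1,\beta_2,\gamma_2)$). Among points with $\alpha_1=\gamma_1=0$, the critical points of $\mathfrak{L}_2$ (gradient with respect to all variables equal to zero) are exactly the points $(0,\beta_1,0,\tfrac{\pi}{2},\gamma_2)$ with $\beta_1\in(0,\pi)$, $\gamma_2\in(-\pi,\pi]$ (and $\alpha_2$ arbitrary). At each of them $\mathfrak{L}_2=1/2$ and the Hessian with respect to $(\alpha_1,\beta_1,\gamma_1,\beta_2,\gamma_2)$ has eigenvalues $0,0,-1,-\tfrac12(1+\cos\beta_1),-\tfrac12(1-\cos\beta_1)$; in particular it is negative semidefinite and singular, and since $1/2<\tfrac{3}{50}(9+\sqrt6)=\max P$, these points are second-order traps.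
   Context: Basis of $\mathbb C^3$: $|1\rangle,|2\rangle,|3\rangle$ (standard basis). Spin-1 matrices in this basis: $J_y=\frac{1}{\sqrt2}\begin{pmatrix}0&-i&0\\ i&0&-i\\ 0&i&0\end{pmatrix}$, $J_z=\mathrm{diag}(1,0,-1)$. Define $Z(\alpha,\beta,\gamma)=e^{-i\alpha J_z}e^{-i\beta J_y}e^{-i\gamma J_z}$ and $Y(\alpha,\beta,\gamma)=e^{-i\alpha J_y}e^{-i\beta J_z}e^{-i\gamma J_y}$. Let $\mathcal R=\{Z(\alpha,\beta,\gamma):\alpha,\beta,\gamma\in\mathbb R\}\subset U(3)$ (the image of $SU(2)$ under its spin-1 representation, a compact 3-dimensional Lie subgroup). For $j\in\{1,2\}$ let $P_j=|j\rangle\langle j|$ and $\mathcal M_j(\rho)=P_j\rho P_j+(\mathbb I-P_j)\rho(\mathbb I-P_j)$ (non-selective measurement of the population of $|j\rangle$). Define $P(U_1,U_2)=\langle 2|U_2\,\mathcal M_1(U_1|1\rangle\langle 1|U_1^\dagger)\,U_2^\dagger|2\rangle$ for $U_1,U_2\in\mathcal R$ (transition probability $|1\rangle\to|2\rangle$ assisted by measurement of $|1\rangle$); its maximum over $\mathcal R\times\mathcal R$ is $\tfrac{3}{50}(9+\sqrt6)$. A second-order trap (for maximization) is a critical point that is not a global maximum and at which the Hessian is negative semidefinite but not negative definite. *)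

theory Defs
  imports "HOL-Analysis.Analysis"
begin

type_synonym cmat = "complex^3^3"

primrec mpow :: "cmat \<Rightarrow> nat \<Rightarrow> cmat" where
  "mpow A 0 = mat 1"
| "mpow A (Suc n) = A ** mpow A n"

definition mexp :: "cmat \<Rightarrow> cmat" where
  "mexp A = (\<chi> i j. (\<Sum>n. (mpow A n) $ i $ j / of_nat (fact n)))"

definition csmul :: "complex \<Rightarrow> cmat \<Rightarrow> cmat" where
  "csmul c A = (\<chi> i j. c * A $ i $ j)"

definition adj :: "cmat \<Rightarrow> cmat" where
  "adj A = (\<chi> i j. cnj (A $ j $ i))"

text \<open>Spin-1 matrices in the standard basis |1>,|2>,|3> (indices 1,2,3).\<close>
definition Jy :: cmat where
  "Jy = vector [vector [0, - \<i> / sqrt 2, 0],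
                vector [\<i> / sqrt 2, 0, - \<i> / sqrt 2],
                vector [0, \<i> / sqrt 2, 0]]"

definition Jz :: cmat where
  "Jz = vector [vector [1, 0, 0], vector [0, 0, 0], vector [0, 0, -1]]"

definition Zrot :: "real \<Rightarrow> real \<Rightarrow> real \<Rightarrow> cmat" where
  "Zrot a b c = mexp (csmul (- \<i> * of_real a) Jz) ** mexp (csmul (- \<i> * of_real b) Jy)
                ** mexp (csmul (- \<i> * of_real c) Jz)"

definition Yrot :: "real \<Rightarrow> real \<Rightarrow> real \<Rightarrow> cmat" where
  "Yrot a b c = mexp (csmul (- \<i> * of_real a) Jy) ** mexp (csmul (- \<i> * of_real b) Jz)
                ** mexp (csmul (- \<i> * of_real c) Jy)"

definition P1 :: cmat where
  "P1 = vector [vector [1, 0, 0], vector [0, 0, 0], vector [0, 0, 0]]"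

definition Meas1 :: "cmat \<Rightarrow> cmat" where
  "Meas1 \<rho> = P1 ** \<rho> ** P1 + (mat 1 - P1) ** \<rho> ** (mat 1 - P1)"

text \<open>Transition probability |1> -> |2>: <2| U2 M_1(U1 |1><1| U1^dag) U2^dag |2>
  (a real number; we take the real part of the complex matrix entry).\<close>
definition Ptrans :: "cmat \<Rightarrow> cmat \<Rightarrow> real" where
  "Ptrans U1 U2 = Re ((U2 ** Meas1 (U1 ** P1 ** adj U1) ** adj U2) $ 2 $ 2)"

text \<open>The landscape L_2; coordinates x = (alpha1, beta1, gamma1, beta2, gamma2),
  alpha2 given separately.\<close>
definition L2 :: "real \<Rightarrow> real^5 \<Rightarrow> real" where
  "L2 a2 x = Ptrans (Yrot (x$1) (x$2) (x$3)) (Zrot a2 (x$4) (x$5))"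

definition L2dom :: "(real^5) set" where
  "L2dom = {x. x$1 \<in> {-pi<..pi} \<and> x$2 \<in> {0<..<pi} \<and> x$3 \<in> {-pi<..pi}
              \<and> x$4 \<in> {0<..<pi} \<and> x$5 \<in> {-pi<..pi}}"

definition has_hessian :: "(real^'n \<Rightarrow> real) \<Rightarrow> real^'n^'n \<Rightarrow> real^'n \<Rightarrow> bool" where
  "has_hessian f H x \<longleftrightarrow> (\<exists>g. (\<forall>j. \<forall>\<^sub>F y in nhds x.
        ((\<lambda>t. f (y + t *\<^sub>R axis j 1)) has_real_derivative g j y) (at 0))
     \<and> (\<forall>i j. ((\<lambda>t. g j (x + t *\<^sub>R axis i 1)) has_real_derivative H $ i $ j) (at 0)))"

definition neg_semidef :: "real^'n^'n \<Rightarrow> bool" where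
  "neg_semidef H \<longleftrightarrow> (\<forall>v. v \<bullet> (H *v v) \<le> 0)"

definition neg_def :: "real^'n^'n \<Rightarrow> bool" where
  "neg_def H \<longleftrightarrow> (\<forall>v. v \<noteq> 0 \<longrightarrow> v \<bullet> (H *v v) < 0)"

definition second_order_trap :: "(real^'n \<Rightarrow> real) \<Rightarrow> (real^'n) set \<Rightarrow> real^'n \<Rightarrow> bool" where
  "second_order_trap f D x \<longleftrightarrow> x \<in> D \<and> (f has_derivative (\<lambda>h. 0)) (at x)
     \<and> (\<exists>y\<in>D. f x < f y)
     \<and> (\<exists>H. has_hessian f H x \<and> neg_semidef H \<and> \<not> neg_def H)"

end

theory Submission
  imports Defs
begin

lemma exp_series: "(\<lambda>n. x^n / of_nat (fact n)) sums exp (x::complex)"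
  using exp_converges[of x] by (simp add: scaleR_conv_of_real divide_inverse mult.commute)

definition comb :: "cmat \<Rightarrow> cmat \<Rightarrow> cmat \<Rightarrow> complex \<Rightarrow> nat \<Rightarrow> cmat" where
  "comb E1 E0 Em x n = csmul (x^n) E1 + csmul (0^n) E0 + csmul ((-x)^n) Em"

lemma mult_csmul: "A ** csmul c E = csmul c (A ** E)"
  by (simp add: vec_eq_iff matrix_matrix_mult_def csmul_def sum_distrib_left algebra_simps)

lemma csmul_csmul: "csmul a (csmul b E) = csmul (a*b) E"
  by (simp add: vec_eq_iff csmul_def)

lemma csmul_left: "csmul x J ** E = csmul x (J ** E)"
  by (simp add: vec_eq_iff matrix_matrix_mult_def csmul_def sum_distrib_left algebra_simps)

lemma mpow_comb:
  assumes "J ** E1 = E1" "J ** E0 = 0" "J ** Em = csmul (-1) Em" "E1 + E0 + Em = mat 1"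
  shows "mpow (csmul x J) n = comb E1 E0 Em x n"
proof (induction n)
  case 0
  then show ?case using assms(4) by (simp add: comb_def csmul_def vec_eq_iff)
next
  case (Suc n)
  have z: "csmul c (0::cmat) = 0" for c by (simp add: csmul_def vec_eq_iff)
  have z2: "csmul 0 (E::cmat) = 0" for E by (simp add: csmul_def vec_eq_iff)
  show ?case using Suc assms
    by (simp add: comb_def matrix_add_ldistrib mult_csmul csmul_left csmul_csmul z z2
       mult.commute)
qed

lemma mexp_comb:
  assumes "J ** E1 = E1" "J ** E0 = 0" "J ** Em = csmul (-1) Em" "E1 + E0 + Em = mat 1"
  shows "mexp (csmul x J) $ i $ j = E1$i$j * exp x + E0$i$j + Em$i$j * exp (-x)"
proof -
  have s: "(\<lambda>n. (mpow (csmul x J) n) $ i $ j / of_nat (fact n)) sums (E1$i$j * exp x + E0$i$j * exp 0 + Em$i$j * exp (-x))"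
  proof -
    have e: "(\<lambda>n. c * (y^n / of_nat (fact n))) sums (c * exp y)" for c y :: complex
      by (rule sums_mult[OF exp_series])
    show ?thesis
    unfolding mpow_comb[OF assms]
    apply (simp add: comb_def csmul_def add_divide_distrib)
    apply (intro sums_add)
    using e[of "E1$i$j" x] e[of "E0$i$j" 0] e[of "Em$i$j" "-x"] by (simp_all add: mult.commute)
  qed
  show ?thesis using sums_unique[OF s] by (simp add: mexp_def)
qed

definition Ez1 :: cmat where "Ez1 = vector [vector [1,0,0], vector [0,0,0], vector [0,0,0]]"
definition Ez0 :: cmat where "Ez0 = vector [vector [0,0,0], vector [0,1,0], vector [0,0,0]]"
definition Ezm :: cmat where "Ezm = vector [vector [0,0,0], vector [0,0,0], vector [0,0,1]]"
definition Ey1 :: cmat where "Ey1 = vector [vector [1/4, - \<i> / (2 * sqrt 2), -1/4],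
   vector [\<i> / (2 * sqrt 2), 1/2, - \<i> / (2 * sqrt 2)], vector [-1/4, \<i> / (2 * sqrt 2), 1/4]]"
definition Eym :: cmat where "Eym = vector [vector [1/4, \<i> / (2 * sqrt 2), -1/4],
   vector [- \<i> / (2 * sqrt 2), 1/2, \<i> / (2 * sqrt 2)], vector [-1/4, - \<i> / (2 * sqrt 2), 1/4]]"
definition Ey0 :: cmat where "Ey0 = vector [vector [1/2,0,1/2], vector [0,0,0], vector [1/2,0,1/2]]"

lemmas mat_simps = vec_eq_iff forall_3 matrix_matrix_mult_def sum_3 csmul_def mat_def

lemma s2: "(complex_of_real (sqrt 2))^2 = 2"
  by (metis of_real_numeral of_real_power real_sqrt_pow2 zero_le_numeral)
lemma s2': "complex_of_real (sqrt 2) * complex_of_real (sqrt 2) = 2"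
  using s2 by (simp add: power2_eq_square)

lemma Jz_facts: "Jz ** Ez1 = Ez1" "Jz ** Ez0 = 0" "Jz ** Ezm = csmul (-1) Ezm" "Ez1 + Ez0 + Ezm = mat 1"
  by (simp_all add: mat_simps Jz_def Ez1_def Ez0_def Ezm_def)

lemma Jy_facts: "Jy ** Ey1 = Ey1" "Jy ** Ey0 = 0" "Jy ** Eym = csmul (-1) Eym" "Ey1 + Ey0 + Eym = mat 1"
  by (simp_all add: mat_simps Jy_def Ey1_def Ey0_def Eym_def field_simps s2')

lemma Dz: "mexp (csmul x Jz) $ i $ j = Ez1$i$j * exp x + Ez0$i$j + Ezm$i$j * exp (-x)"
  by (rule mexp_comb[OF Jz_facts])
lemma Dy: "mexp (csmul x Jy) $ i $ j = Ey1$i$j * exp x + Ey0$i$j + Eym$i$j * exp (-x)"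
  by (rule mexp_comb[OF Jy_facts])

definition dmat :: "real \<Rightarrow> cmat" where
 "dmat b = vector [vector [complex_of_real ((1 + cos b)/2), complex_of_real (- sin b / sqrt 2), complex_of_real ((1 - cos b)/2)],
                   vector [complex_of_real (sin b / sqrt 2), complex_of_real (cos b), complex_of_real (- sin b / sqrt 2)],
                   vector [complex_of_real ((1 - cos b)/2), complex_of_real (sin b / sqrt 2), complex_of_real ((1 + cos b)/2)]]"
definition Dmat :: "real \<Rightarrow> cmat" where
 "Dmat a = vector [vector [cis (-a), 0, 0], vector [0, 1, 0], vector [0, 0, cis a]]"

lemma Dz_expl: "mexp (csmul (- \<i> * of_real a) Jz) = Dmat a"
  by (simp add: vec_eq_iff forall_3 Dz Ez1_def Ez0_def Ezm_def Dmat_def cis_conv_exp)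

lemma Dy_expl: "mexp (csmul (- \<i> * of_real b) Jy) = dmat b"
  apply (simp add: vec_eq_iff forall_3 Dy Ey1_def Ey0_def Eym_def dmat_def complex_eq_iff Re_exp Im_exp)
  done

lemma Zrow:
  "Zrot a b c $ 2 $ 1 = Complex (sin b / sqrt 2 * cos c) (- sin b / sqrt 2 * sin c)"
  "Zrot a b c $ 2 $ 2 = complex_of_real (cos b)"
  "Zrot a b c $ 2 $ 3 = Complex (- sin b / sqrt 2 * cos c) (- sin b / sqrt 2 * sin c)"
  unfolding Zrot_def Dz_expl Dy_expl
  by (simp_all add: matrix_matrix_mult_def sum_3 Dmat_def dmat_def complex_eq_iff)

definition p1r where "p1r a b c = cos b * (1+cos a * cos c)/2 - sin a * sin c/2"
definition p1i where "p1i a b c = - sin b * (cos a+cos c)/2"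
definition p2r where "p2r a b c = (sin a * cos b * cos c + cos a * sin c)/sqrt 2"
definition p2i where "p2i a b (c::real) = - sin a * sin b/sqrt 2"
definition p3r where "p3r a b c = cos b * (1 - cos a * cos c)/2 + sin a * sin c/2"
definition p3i where "p3i a b c = sin b * (cos a - cos c)/2"

lemma s2r: "sqrt 2 * sqrt 2 = (2::real)" by simp
lemma s2r': "sqrt 2 * (sqrt 2 * x) = (2::real) * x" by (simp add: mult.assoc[symmetric])

lemma Ycol:
  "Yrot a b c $ 1 $ 1 = Complex (p1r a b c) (p1i a b c)"
  "Yrot a b c $ 2 $ 1 = Complex (p2r a b c) (p2i a b c)"
  "Yrot a b c $ 3 $ 1 = Complex (p3r a b c) (p3i a b c)"
  unfolding Yrot_def Dz_expl Dy_expl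
  by (simp_all add: matrix_matrix_mult_def sum_3 Dmat_def dmat_def complex_eq_iff
      p1r_def p1i_def p2r_def p2i_def p3r_def p3i_def field_simps s2r s2r')

lemma nsq: "(cmod z)^2 = Re (z * cnj z)"
  by (metis Re_complex_of_real complex_norm_square)

lemma Ptrans_formula: "Ptrans U1 U2 = (cmod (U2$2$1))^2 * (cmod (U1$1$1))^2
   + (cmod (U2$2$2 * U1$2$1 + U2$2$3 * U1$3$1))^2"
proof -
  have r: "U1 ** P1 ** adj U1 = (\<chi> i j. U1$i$1 * cnj (U1$j$1))"
    by (simp add: vec_eq_iff matrix_matrix_mult_def sum_3 P1_def adj_def)
  have m: "Meas1 (\<chi> i j. f i j) = (\<chi> i j. if (i=1)=(j=1) then f i j else 0)" for f
    by (simp add: vec_eq_iff forall_3 matrix_matrix_mult_def sum_3 P1_def Meas1_def mat_def)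
  have e: "(U2 ** Meas1 (U1 ** P1 ** adj U1) ** adj U2)$2$2 =
     (U2$2$1 * cnj (U2$2$1)) * (U1$1$1 * cnj (U1$1$1)) + (U2$2$2 * U1$2$1 + U2$2$3 * U1$3$1) * cnj (U2$2$2 * U1$2$1 + U2$2$3 * U1$3$1)"
    unfolding r m by (simp add: matrix_matrix_mult_def sum_3 adj_def algebra_simps)
  show ?thesis unfolding Ptrans_def e nsq
    by (simp add: Re_complex_of_real)
qed

definition Wr where "Wr a b c d e = cos d * p2r a b c - sin d / sqrt 2 * (cos e * p3r a b c - sin e * p3i a b c)"
definition Wi where "Wi a b c d e = cos d * p2i a b c - sin d / sqrt 2 * (cos e * p3i a b c + sin e * p3r a b c)"
definition FF where "FF a b c d e = (sin d)^2 / 2 * ((p1r a b c)^2 + (p1i a b c)^2) + (Wr a b c d e)^2 + (Wi a b c d e)^2"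

lemma L2_closed: "L2 a2 x = FF (x$1) (x$2) (x$3) (x$4) (x$5)"
proof -
  have k: "(cmod (Zrot a b c $ 2 $ 1))^2 = (sin b)^2 / 2" for a b c :: real
  proof -
    have e: "(cos c)^2 + (sin c)^2 = 1" by simp
    have "(sin b / sqrt 2 * cos c)^2 + (- sin b / sqrt 2 * sin c)^2 = (sin b)^2/2"
      by (simp add: power_mult_distrib power_divide) (metis e distrib_left mult_1_right)
    then show ?thesis unfolding Zrow cmod_power2 by simp
  qed
  have w: "(cmod (Zrot a d e $ 2 $ 2 * Yrot a1 b c $ 2 $ 1 + Zrot a d e $ 2 $ 3 * Yrot a1 b c $ 3 $ 1))^2
     = (Wr a1 b c d e)^2 + (Wi a1 b c d e)^2" for a a1 b c d e :: real
    unfolding Zrow Ycol cmod_power2 Wr_def Wi_def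
    by (simp add: algebra_simps)
  show ?thesis
    unfolding L2_def Ptrans_formula k w FF_def
    by (simp add: Ycol cmod_power2)
qed

lemma has_derivative_nth: "((\<lambda>y. y$k) has_derivative (\<lambda>h. h$k)) F"
  by (rule bounded_linear_imp_has_derivative[OF bounded_linear_vec_nth])
lemma has_derivative_divc:
  "(f has_derivative f') F \<Longrightarrow> ((\<lambda>x. f x / (c::real)) has_derivative (\<lambda>h. f' h / c)) F"
  using has_derivative_mult_left[of f f' F "inverse c"] by (simp add: divide_inverse)
lemmas myd = has_derivative_nth has_derivative_sin has_derivative_cos has_derivative_mult
  has_derivative_add has_derivative_diff has_derivative_minus has_derivative_const has_derivative_divc

definition dp1r :: "real^5 \<Rightarrow> real^5 \<Rightarrow> real" where
  "dp1r y h = (cos (y$2) * (- sin (y$1) * cos (y$3))/2 - cos (y$1) * sin (y$3)/2) * h$1 + (- sin (y$2) * (1 + cos (y$1) * cos (y$3))/2) * h$2 + (cos (y$2) * (- cos (y$1) * sin (y$3))/2 - sin (y$1) * cos (y$3)/2) * h$3"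

lemma has_dp1r: "((\<lambda>y. p1r (y$1) (y$2) (y$3)) has_derivative dp1r y) (at y)"
  unfolding p1r_def dp1r_def
  apply (rule has_derivative_eq_rhs)
   apply (rule myd)+
  apply (rule ext)
  apply (simp add: field_simps s2r s2r')
  done

definition dp1i :: "real^5 \<Rightarrow> real^5 \<Rightarrow> real" where
  "dp1i y h = (sin (y$2) * sin (y$1)/2) * h$1 + (- cos (y$2) * (cos (y$1) + cos (y$3))/2) * h$2 + (sin (y$2) * sin (y$3)/2) * h$3"

lemma has_dp1i: "((\<lambda>y. p1i (y$1) (y$2) (y$3)) has_derivative dp1i y) (at y)"
  unfolding p1i_def dp1i_def
  apply (rule has_derivative_eq_rhs)
   apply (rule myd)+
  apply (rule ext)
  apply (simp add: field_simps s2r s2r')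
  done

definition dp2r :: "real^5 \<Rightarrow> real^5 \<Rightarrow> real" where
  "dp2r y h = ((cos (y$1) * cos (y$2) * cos (y$3) - sin (y$1) * sin (y$3))/sqrt 2) * h$1 + ((- sin (y$1) * sin (y$2) * cos (y$3))/sqrt 2) * h$2 + ((- sin (y$1) * cos (y$2) * sin (y$3) + cos (y$1) * cos (y$3))/sqrt 2) * h$3"

lemma has_dp2r: "((\<lambda>y. p2r (y$1) (y$2) (y$3)) has_derivative dp2r y) (at y)"
  unfolding p2r_def dp2r_def
  apply (rule has_derivative_eq_rhs)
   apply (rule myd)+
  apply (rule ext)
  apply (simp add: field_simps s2r s2r')
  done

definition dp2i :: "real^5 \<Rightarrow> real^5 \<Rightarrow> real" where
  "dp2i y h = (- cos (y$1) * sin (y$2)/sqrt 2) * h$1 + (- sin (y$1) * cos (y$2)/sqrt 2) * h$2 + (0) * h$3"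

lemma has_dp2i: "((\<lambda>y. p2i (y$1) (y$2) (y$3)) has_derivative dp2i y) (at y)"
  unfolding p2i_def dp2i_def
  apply (rule has_derivative_eq_rhs)
   apply (rule myd)+
  apply (rule ext)
  apply (simp add: field_simps s2r s2r')
  done

definition dp3r :: "real^5 \<Rightarrow> real^5 \<Rightarrow> real" where
  "dp3r y h = (cos (y$2) * (sin (y$1) * cos (y$3))/2 + cos (y$1) * sin (y$3)/2) * h$1 + (- sin (y$2) * (1 - cos (y$1) * cos (y$3))/2) * h$2 + (cos (y$2) * (cos (y$1) * sin (y$3))/2 + sin (y$1) * cos (y$3)/2) * h$3"

lemma has_dp3r: "((\<lambda>y. p3r (y$1) (y$2) (y$3)) has_derivative dp3r y) (at y)"
  unfolding p3r_def dp3r_def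
  apply (rule has_derivative_eq_rhs)
   apply (rule myd)+
  apply (rule ext)
  apply (simp add: field_simps s2r s2r')
  done

definition dp3i :: "real^5 \<Rightarrow> real^5 \<Rightarrow> real" where
  "dp3i y h = (- sin (y$2) * sin (y$1)/2) * h$1 + (cos (y$2) * (cos (y$1) - cos (y$3))/2) * h$2 + (sin (y$2) * sin (y$3)/2) * h$3"

lemma has_dp3i: "((\<lambda>y. p3i (y$1) (y$2) (y$3)) has_derivative dp3i y) (at y)"
  unfolding p3i_def dp3i_def
  apply (rule has_derivative_eq_rhs)
   apply (rule myd)+
  apply (rule ext)
  apply (simp add: field_simps s2r s2r')
  done

definition fL :: "real^5 \<Rightarrow> real" where "fL y = FF (y$1) (y$2) (y$3) (y$4) (y$5)"

definition FDF :: "real^5 \<Rightarrow> real^5 \<Rightarrow> real" where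
 "FDF y h = sin (y$4) * cos (y$4) * h$4 * (p1r (y$1) (y$2) (y$3) * p1r (y$1) (y$2) (y$3) + p1i (y$1) (y$2) (y$3) * p1i (y$1) (y$2) (y$3))
   + sin (y$4) * sin (y$4) * (p1r (y$1) (y$2) (y$3) * dp1r y h + p1i (y$1) (y$2) (y$3) * dp1i y h)
   + 2 * Wr (y$1) (y$2) (y$3) (y$4) (y$5) *
      (- sin (y$4) * h$4 * p2r (y$1) (y$2) (y$3) + cos (y$4) * dp2r y h
       - (cos (y$4) * h$4 / sqrt 2 * (cos (y$5) * p3r (y$1) (y$2) (y$3) - sin (y$5) * p3i (y$1) (y$2) (y$3))
          + sin (y$4) / sqrt 2 * (- sin (y$5) * h$5 * p3r (y$1) (y$2) (y$3) + cos (y$5) * dp3r y h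
               - cos (y$5) * h$5 * p3i (y$1) (y$2) (y$3) - sin (y$5) * dp3i y h)))
   + 2 * Wi (y$1) (y$2) (y$3) (y$4) (y$5) *
      (- sin (y$4) * h$4 * p2i (y$1) (y$2) (y$3) + cos (y$4) * dp2i y h
       - (cos (y$4) * h$4 / sqrt 2 * (cos (y$5) * p3i (y$1) (y$2) (y$3) + sin (y$5) * p3r (y$1) (y$2) (y$3))
          + sin (y$4) / sqrt 2 * (- sin (y$5) * h$5 * p3i (y$1) (y$2) (y$3) + cos (y$5) * dp3i y h
               + cos (y$5) * h$5 * p3r (y$1) (y$2) (y$3) + sin (y$5) * dp3r y h)))"

lemmas hasdp = has_dp1r has_dp1i has_dp2r has_dp2i has_dp3r has_dp3i

lemma fL_deriv: "(fL has_derivative FDF y) (at y)"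
  unfolding fL_def[abs_def] FF_def Wr_def Wi_def power2_eq_square
  apply (rule has_derivative_eq_rhs)
   apply (rule myd hasdp)+
  apply (rule ext)
  apply (simp add: FDF_def Wr_def Wi_def field_simps s2r s2r')
  done

lemma line_deriv: assumes "(f has_derivative f') (at y)"
  shows "((\<lambda>t. f (y + t *\<^sub>R v)) has_real_derivative f' v) (at 0)"
proof -
  have 1: "((\<lambda>t. y + t *\<^sub>R v) has_derivative (\<lambda>t. t *\<^sub>R v)) (at 0)"
    by (auto intro!: derivative_eq_intros)
  have 2: "(f has_derivative f') (at (y + 0 *\<^sub>R v))" using assms by simp
  have "((\<lambda>t. f (y + t *\<^sub>R v)) has_derivative (\<lambda>t. f' (t *\<^sub>R v))) (at 0)"
    using has_derivative_compose[OF 1 2] by (simp add: o_def)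
  moreover have "f' (t *\<^sub>R v) = t * f' v" for t
    using linear.scaleR[OF has_derivative_linear[OF assms]] by simp
  moreover have "(\<lambda>t. t * f' v) = (*) (f' v)" by (rule ext) simp
  ultimately show ?thesis by (simp add: has_field_derivative_def)
qed

lemma p_at0: "p1r 0 b 0 = cos b" "p1i 0 b 0 = - sin b" "p2r 0 b 0 = 0" "p2i 0 b 0 = 0"
  "p3r 0 b 0 = 0" "p3i 0 b 0 = 0"
  by (simp_all add: p1r_def p1i_def p2r_def p2i_def p3r_def p3i_def)

lemma FDF_slice: assumes "x$1 = 0" "x$3 = 0"
  shows "FDF x h = sin (x$4) * cos (x$4) * h$4"
  using assms
  apply (simp add: FDF_def Wr_def Wi_def p_at0 dp1r_def dp1i_def dp2r_def dp2i_def dp3r_def dp3i_def)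
  done

lemma fL_slice: assumes "x$1 = 0" "x$3 = 0"
  shows "fL x = (sin (x$4))^2 / 2"
  using assms by (simp add: fL_def FF_def Wr_def Wi_def p_at0)

lemma gD1: assumes "x$1 = 0" "x$3 = 0" "x$4 = pi/2"
  shows "((\<lambda>y. FDF y (axis 1 1)) has_derivative (\<lambda>h. -1/2 * h$1 - cos (x$2)/2 * h$3)) (at x)"
  unfolding FDF_def dp1r_def dp1i_def dp2r_def dp2i_def dp3r_def dp3i_def Wr_def Wi_def
  apply (rule has_derivative_eq_rhs)
   apply (rule myd hasdp)+
  apply (rule ext)
  apply (simp add: assms p_at0 dp1r_def dp1i_def dp2r_def dp2i_def dp3r_def dp3i_def axis_def field_simps s2r s2r')
  apply (use sin_cos_squared_add[of "x$2"] in algebra)?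
  done

lemma gD2: assumes "x$1 = 0" "x$3 = 0" "x$4 = pi/2"
  shows "((\<lambda>y. FDF y (axis 2 1)) has_derivative (\<lambda>h. 0)) (at x)"
  unfolding FDF_def dp1r_def dp1i_def dp2r_def dp2i_def dp3r_def dp3i_def Wr_def Wi_def
  apply (rule has_derivative_eq_rhs)
   apply (rule myd hasdp)+
  apply (rule ext)
  apply (simp add: assms p_at0 dp1r_def dp1i_def dp2r_def dp2i_def dp3r_def dp3i_def axis_def field_simps s2r s2r')
  apply (use sin_cos_squared_add[of "x$2"] in algebra)?
  done

lemma gD3: assumes "x$1 = 0" "x$3 = 0" "x$4 = pi/2"
  shows "((\<lambda>y. FDF y (axis 3 1)) has_derivative (\<lambda>h. - cos (x$2)/2 * h$1 - 1/2 * h$3)) (at x)"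
  unfolding FDF_def dp1r_def dp1i_def dp2r_def dp2i_def dp3r_def dp3i_def Wr_def Wi_def
  apply (rule has_derivative_eq_rhs)
   apply (rule myd hasdp)+
  apply (rule ext)
  apply (simp add: assms p_at0 dp1r_def dp1i_def dp2r_def dp2i_def dp3r_def dp3i_def axis_def field_simps s2r s2r')
  apply (use sin_cos_squared_add[of "x$2"] in algebra)?
  done

lemma gD4: assumes "x$1 = 0" "x$3 = 0" "x$4 = pi/2"
  shows "((\<lambda>y. FDF y (axis 4 1)) has_derivative (\<lambda>h. - h$4)) (at x)"
  unfolding FDF_def dp1r_def dp1i_def dp2r_def dp2i_def dp3r_def dp3i_def Wr_def Wi_def
  apply (rule has_derivative_eq_rhs)
   apply (rule myd hasdp)+
  apply (rule ext)
  apply (simp add: assms p_at0 dp1r_def dp1i_def dp2r_def dp2i_def dp3r_def dp3i_def axis_def field_simps s2r s2r')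
  apply (use sin_cos_squared_add[of "x$2"] in algebra)?
  done

lemma gD5: assumes "x$1 = 0" "x$3 = 0" "x$4 = pi/2"
  shows "((\<lambda>y. FDF y (axis 5 1)) has_derivative (\<lambda>h. 0)) (at x)"
  unfolding FDF_def dp1r_def dp1i_def dp2r_def dp2i_def dp3r_def dp3i_def Wr_def Wi_def
  apply (rule has_derivative_eq_rhs)
   apply (rule myd hasdp)+
  apply (rule ext)
  apply (simp add: assms p_at0 dp1r_def dp1i_def dp2r_def dp2i_def dp3r_def dp3i_def axis_def field_simps s2r s2r')
  apply (use sin_cos_squared_add[of "x$2"] in algebra)?
  done

lemma exhaust_5:
  fixes x :: 5
  shows "x = 1 \<or> x = 2 \<or> x = 3 \<or> x = 4 \<or> x = 5"
proof (induct x)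
  case (of_int z)
  then have "z = 0 \<or> z = 1 \<or> z = 2 \<or> z = 3 \<or> z = 4" by fastforce
  then show ?case by auto
qed

lemma UNIV_5: "UNIV = {1, 2, 3, 4, 5::5}"
  using exhaust_5 by auto

lemma det5:
  fixes A :: "real^5^5"
  assumes z: "\<And>i j. A$i$j \<noteq> 0 \<Longrightarrow> i = j \<or> (i = 1 \<and> j = 3) \<or> (i = 3 \<and> j = 1)"
  shows "det A = A$1$1*A$2$2*A$3$3*A$4$4*A$5$5 - A$1$3*A$3$1*A$2$2*A$4$4*A$5$5"
proof -
  let ?t = "Transposition.transpose (1::5) 3"
  have key: "p = id \<or> p = ?t" if p: "p permutes UNIV" and nz: "\<forall>i. A$i$(p i) \<noteq> 0" for p
  proof -
    have a: "p i = i \<or> (i = 1 \<and> p i = 3) \<or> (i = 3 \<and> p i = 1)" for i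
      using z[of i "p i"] nz by auto
    have inj: "inj p" using p permutes_inj by blast
    have p2: "p 2 = 2" "p 4 = 4" "p 5 = 5" using a[of 2] a[of 4] a[of 5] by auto
    consider "p 1 = 1" | "p 1 = 3" using a[of 1] by auto
    then show ?thesis
    proof cases
      case 1
      have "p 3 \<noteq> 1"
      proof
        assume "p 3 = 1"
        then have "p 3 = p 1" using 1 by simp
        then have "(3::5) = 1" using inj by (rule injD[rotated])
        then show False by simp
      qed
      then have "p 3 = 3" using a[of 3] by auto
      then have "p k = k" for k using exhaust_5[of k] 1 p2 by (elim disjE) auto
      then have "p = id" by auto
      then show ?thesis by simp
    next
      case 2
      have "p 3 \<noteq> 3"
      proof
        assume "p 3 = 3"
        then have "p 3 = p 1" using 2 by simp
        then have "(3::5) = 1" using inj by (rule injD[rotated])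
        then show False by simp
      qed
      then have "p 3 = 1" using a[of 3] by auto
      then have "p k = ?t k" for k using exhaust_5[of k] 2 p2 by (elim disjE) (auto simp: transpose_def)
      then have "p = ?t" by auto
      then show ?thesis by simp
    qed
  qed
  have fin: "finite {p. p permutes (UNIV :: 5 set)}" by (rule finite_permutations) simp
  have sub: "{id, ?t} \<subseteq> {p. p permutes (UNIV :: 5 set)}"
    by (auto simp: permutes_id permutes_swap_id)
  have "det A = (\<Sum>p\<in>{id, ?t}. of_int (sign p) * (\<Prod>i\<in>UNIV. A$i$p i))"
    unfolding det_def
  proof (rule sum.mono_neutral_right[OF fin sub])
    show "\<forall>p\<in>{p. p permutes UNIV} - {id, ?t}. of_int (sign p) * (\<Prod>i\<in>UNIV. A $ i $ p i) = 0"
    proof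
      fix p assume "p \<in> {p. p permutes UNIV} - {id, ?t}"
      then have "\<not> (\<forall>i. A$i$(p i) \<noteq> 0)" using key by auto
      then obtain i where "A$i$(p i) = 0" by auto
      then have "(\<Prod>i\<in>UNIV. A $ i $ p i) = 0" by (meson UNIV_I finite prod_zero)
      then show "of_int (sign p) * (\<Prod>i\<in>UNIV. A $ i $ p i) = 0" by simp
    qed
  qed
  also have "\<dots> = A$1$1*A$2$2*A$3$3*A$4$4*A$5$5 - A$1$3*A$3$1*A$2$2*A$4$4*A$5$5"
  proof -
    have ne: "id \<noteq> ?t"
    proof
      assume "id = ?t"
      then have "id (1::5) = ?t 1" by simp
      then show False by simp
    qed
    have pr: "(\<Prod>i\<in>UNIV. A$i$p i) = A$1$(p 1) * A$2$(p 2) * A$3$(p 3) * A$4$(p 4) * A$5$(p 5)" for p :: "5 \<Rightarrow> 5"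
      unfolding UNIV_5 by (simp add: mult.assoc)
    have tv: "?t 1 = 3" "?t 2 = 2" "?t 3 = 1" "?t 4 = 4" "?t 5 = 5" by (simp_all add: transpose_def)
    have "(\<Sum>p\<in>{id, ?t}. of_int (sign p) * (\<Prod>i\<in>UNIV. A$i$p i))
       = of_int (sign (id::5\<Rightarrow>5)) * (\<Prod>i\<in>UNIV. A$i$id i) + of_int (sign ?t) * (\<Prod>i\<in>UNIV. A$i$?t i)"
      using ne by simp
    also have "\<dots> = A$1$1*A$2$2*A$3$3*A$4$4*A$5$5 - A$1$3*A$3$1*A$2$2*A$4$4*A$5$5"
      unfolding pr tv by (simp add: sign_swap_id)
    finally show ?thesis .
  qed
  finally show ?thesis .
qed

definition Hm :: "real \<Rightarrow> real^5^5" where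
  "Hm b = (\<chi> i j. if i = 1 \<and> j = 1 then -1/2 else if i = 3 \<and> j = 3 then -1/2
     else if (i = 1 \<and> j = 3) \<or> (i = 3 \<and> j = 1) then - cos b / 2
     else if i = 4 \<and> j = 4 then -1 else 0)"

lemma sum_5: "sum f (UNIV::5 set) = f 1 + f 2 + f 3 + f 4 + f 5"
  unfolding UNIV_5 by (simp add: ac_simps)

lemma hess: assumes "x$1 = 0" "x$3 = 0" "x$4 = pi/2"
  shows "has_hessian fL (Hm (x$2)) x"
proof -
  have T: "\<exists>T. ((\<lambda>y. FDF y (axis j 1)) has_derivative T) (at x) \<and> (\<forall>i. T (axis i 1) = Hm (x$2)$i$j)" for j
  proof -
    consider "j = 1" | "j = 2" | "j = 3" | "j = 4" | "j = 5" using exhaust_5 by blast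
    then show ?thesis
    proof cases
      case 1 show ?thesis unfolding 1
        apply (rule exI, rule conjI, rule gD1[OF assms])
        apply (rule allI) subgoal for i using exhaust_5[of i] by (elim disjE) (simp_all add: 1 axis_def Hm_def)
        done
    next
      case 2 show ?thesis unfolding 2
        apply (rule exI, rule conjI, rule gD2[OF assms])
        apply (rule allI) subgoal for i using exhaust_5[of i] by (elim disjE) (simp_all add: 2 axis_def Hm_def)
        done
    next
      case 3 show ?thesis unfolding 3
        apply (rule exI, rule conjI, rule gD3[OF assms])
        apply (rule allI) subgoal for i using exhaust_5[of i] by (elim disjE) (simp_all add: 3 axis_def Hm_def)
        done
    next
      case 4 show ?thesis unfolding 4
        apply (rule exI, rule conjI, rule gD4[OF assms])
        apply (rule allI) subgoal for i using exhaust_5[of i] by (elim disjE) (simp_all add: 4 axis_def Hm_def)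
        done
    next
      case 5 show ?thesis unfolding 5
        apply (rule exI, rule conjI, rule gD5[OF assms])
        apply (rule allI) subgoal for i using exhaust_5[of i] by (elim disjE) (simp_all add: 5 axis_def Hm_def)
        done
    qed
  qed
  show ?thesis
    unfolding has_hessian_def
  proof (intro exI conjI allI)
    fix j :: 5
    show "\<forall>\<^sub>F y in nhds x. ((\<lambda>t. fL (y + t *\<^sub>R axis j 1)) has_real_derivative FDF y (axis j 1)) (at 0)"
      by (rule always_eventually) (auto intro: line_deriv[OF fL_deriv])
  next
    fix i j :: 5
    from T[of j] obtain Tj where "((\<lambda>y. FDF y (axis j 1)) has_derivative Tj) (at x)" "\<forall>i. Tj (axis i 1) = Hm (x$2)$i$j"
      by blast
    then show "((\<lambda>t. FDF (x + t *\<^sub>R axis i 1) (axis j 1)) has_real_derivative Hm (x$2) $ i $ j) (at 0)"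
      using line_deriv[of "\<lambda>y. FDF y (axis j 1)" Tj x "axis i 1"] by simp
  qed
qed

lemma Hm_sym: "transpose (Hm b) = Hm b"
proof -
  have "Hm b $ i $ j = Hm b $ j $ i" for i j
    using exhaust_5[of i] exhaust_5[of j] by (elim disjE) (simp_all add: Hm_def)
  then show ?thesis by (simp add: vec_eq_iff transpose_def)
qed

lemma Hm_char: "det (t *\<^sub>R mat 1 - Hm b) =
   t^2 * (t + 1) * (t + (1 + cos b) / 2) * (t + (1 - cos b) / 2)"
proof -
  have "det (t *\<^sub>R mat 1 - Hm b) = (t + 1/2) * t * (t + 1/2) * (t + 1) * t - (cos b / 2) * (cos b / 2) * t * (t + 1) * t"
  proof (subst det5)
    fix i j :: 5
    assume "(t *\<^sub>R mat 1 - Hm b) $ i $ j \<noteq> 0"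
    then show "i = j \<or> i = 1 \<and> j = 3 \<or> i = 3 \<and> j = 1"
      by (rule contrapos_np) (simp add: Hm_def mat_def, blast)
  next
    show "(t *\<^sub>R mat 1 - Hm b) $ 1 $ 1 * (t *\<^sub>R mat 1 - Hm b) $ 2 $ 2 * (t *\<^sub>R mat 1 - Hm b) $ 3 $ 3 *
    (t *\<^sub>R mat 1 - Hm b) $ 4 $ 4 * (t *\<^sub>R mat 1 - Hm b) $ 5 $ 5 -
    (t *\<^sub>R mat 1 - Hm b) $ 1 $ 3 * (t *\<^sub>R mat 1 - Hm b) $ 3 $ 1 * (t *\<^sub>R mat 1 - Hm b) $ 2 $ 2 *
    (t *\<^sub>R mat 1 - Hm b) $ 4 $ 4 * (t *\<^sub>R mat 1 - Hm b) $ 5 $ 5 =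
    (t + 1/2) * t * (t + 1/2) * (t + 1) * t - (cos b / 2) * (cos b / 2) * t * (t + 1) * t"
      by (simp add: Hm_def mat_def)
  qed
  then show ?thesis by (simp add: field_simps power2_eq_square)
qed

lemma Hm_det: "det (Hm b) = 0"
proof (subst det5)
  fix i j :: 5
  assume "Hm b $ i $ j \<noteq> 0"
  then show "i = j \<or> i = 1 \<and> j = 3 \<or> i = 3 \<and> j = 1"
    by (rule contrapos_np) (simp add: Hm_def, blast)
qed (simp add: Hm_def)

lemma Hm_quad: "v \<bullet> (Hm b *v v) = -(1/2)*(v$1 + cos b * v$3)^2 - (1/2)*(sin b * v$3)^2 - (v$4)^2"
proof -
  have "v \<bullet> (Hm b *v v) = -(1/2)*(v$1)^2 - cos b * v$1 * v$3 - (1/2)*(v$3)^2 - (v$4)^2"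
  proof -
    have e: "(Hm b *v v) $ k = (if k = 1 then -1/2 * v$1 - cos b/2 * v$3 else if k = 3 then -cos b/2 * v$1 - 1/2 * v$3 else if k = 4 then - v$4 else 0)" for k
      using exhaust_5[of k] by (elim disjE) (simp_all add: sum_5 matrix_vector_mult_def Hm_def)
    show ?thesis unfolding inner_vec_def e by (simp add: sum_5 power2_eq_square algebra_simps)
  qed
  then show ?thesis using sin_cos_squared_add[of b] by algebra
qed

lemma Hm_nsd: "neg_semidef (Hm b)"
  unfolding neg_semidef_def Hm_quad
proof
  fix v :: "real^5"
  show "-(1/2)*(v$1 + cos b * v$3)^2 - (1/2)*(sin b * v$3)^2 - (v$4)^2 \<le> 0"
    using zero_le_power2[of "v$1 + cos b * v$3"] zero_le_power2[of "sin b * v$3"] zero_le_power2[of "v$4"]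
    by linarith
qed

lemma Hm_not_nd: "\<not> neg_def (Hm b)"
proof -
  have "axis 2 (1::real) \<noteq> (0::real^5)" by (simp add: axis_eq_0_iff)
  moreover have "axis 2 (1::real) \<bullet> (Hm b *v axis 2 1) = 0"
    unfolding Hm_quad by (simp add: axis_def)
  ultimately show ?thesis unfolding neg_def_def by (metis less_irrefl)
qed

lemma crit: "(fL has_derivative (\<lambda>h. 0)) (at x) \<longleftrightarrow> x$4 = pi/2"
    if x: "x \<in> L2dom" "x$1 = 0" "x$3 = 0" for x
  proof -
    have r4: "0 < x$4" "x$4 < pi" using x(1) by (auto simp: L2dom_def)
    have D: "(fL has_derivative FDF x) (at x)" by (rule fL_deriv)
    have Fx: "FDF x = (\<lambda>h. sin (x$4) * cos (x$4) * h$4)"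
      by (rule ext) (rule FDF_slice[OF x(2,3)])
    show ?thesis
    proof
      assume h0: "(fL has_derivative (\<lambda>h. 0)) (at x)"
      have "FDF x = (\<lambda>h. 0)" by (rule has_derivative_unique[OF D h0])
      then have "FDF x (axis 4 1) = 0" by simp
      then have "sin (x$4) * cos (x$4) = 0" unfolding Fx by (simp add: axis_def)
      moreover have "sin (x$4) > 0" using r4 by (simp add: sin_gt_zero)
      ultimately have "cos (x$4) = cos (pi/2)" by simp
      moreover have "0 \<le> x$4" "x$4 \<le> pi" using r4 by auto
      moreover have "0 \<le> pi/2" "pi/2 \<le> pi" using pi_gt_zero by auto
      ultimately show "x$4 = pi/2" using cos_inj_pi by blast
    next
      assume h4: "x$4 = pi/2"
      have "FDF x = (\<lambda>h. 0)" unfolding Fx h4 by simp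
      then show "(fL has_derivative (\<lambda>h. 0)) (at x)" using D by simp
    qed
  qed

definition ywit :: "real^5" where "ywit = (\<chi> k. if k = 1 then 0 else if k = 4 then pi/4 else pi/2)"

lemma ywit: "ywit$1 = 0" "ywit$2 = pi/2" "ywit$3 = pi/2" "ywit$4 = pi/4" "ywit$5 = pi/2"
  by (simp_all add: ywit_def)

lemma ywit_dom: "ywit \<in> L2dom"
proof -
  have "0 < pi" by (rule pi_gt_zero)
  then show ?thesis unfolding L2dom_def mem_Collect_eq ywit by auto
qed

lemma fywit: "fL ywit = 5/8"
  unfolding fL_def FF_def Wr_def Wi_def ywit
  by (simp add: p1r_def p1i_def p2r_def p2i_def p3r_def p3i_def sin_45 cos_45 power2_eq_square field_simps s2r s2r')

lemma six: "1/2 < 3/50 * (9 + sqrt (6::real))"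
proof -
  have "0 \<le> sqrt (6::real)" by simp
  moreover have "3/50 * (9 + sqrt (6::real)) = 27/50 + 3/50 * sqrt 6" by (simp add: algebra_simps)
  ultimately show ?thesis by linarith
qed


lemma trap: assumes x: "x \<in> L2dom" "x$1 = 0" "x$3 = 0" "x$4 = pi/2"
  shows "second_order_trap fL L2dom x"
  unfolding second_order_trap_def
proof (intro conjI)
  show "x \<in> L2dom" by (rule x(1))
  show "(fL has_derivative (\<lambda>h. 0)) (at x)" using crit[OF x(1-3)] x(4) by simp
  have fx: "fL x = 1/2" using fL_slice[OF x(2,3)] unfolding x(4) by simp
  show "\<exists>y\<in>L2dom. fL x < fL y"
    by (rule bexI[OF _ ywit_dom]) (simp add: fx fywit)
  show "\<exists>H. has_hessian fL H x \<and> neg_semidef H \<and> \<not> neg_def H"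
    by (rule exI[of _ "Hm (x$2)"]) (simp add: hess[OF x(2-4)] Hm_nsd Hm_not_nd)
qed

theorem lemma2:
  fixes a2 :: real
  assumes "a2 \<in> {-pi<..pi}"
  shows "(\<forall>a2'. \<forall>x. L2 a2' x = L2 a2 x)
    \<and> (\<forall>x\<in>L2dom. x$1 = 0 \<and> x$3 = 0 \<longrightarrow>
          ((L2 a2 has_derivative (\<lambda>h. 0)) (at x) \<longleftrightarrow> x$4 = pi/2))
    \<and> (\<forall>x\<in>L2dom. x$1 = 0 \<and> x$3 = 0 \<and> x$4 = pi/2 \<longrightarrow>
          L2 a2 x = 1/2
        \<and> (\<exists>H. has_hessian (L2 a2) H x
             \<and> transpose H = H
             \<and> (\<forall>t::real. det (t *\<^sub>R mat 1 - H) =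
                   t^2 * (t + 1) * (t + (1 + cos (x$2)) / 2) * (t + (1 - cos (x$2)) / 2))
             \<and> neg_semidef H \<and> \<not> neg_def H \<and> det H = 0)
        \<and> 1/2 < 3/50 * (9 + sqrt 6)
        \<and> second_order_trap (L2 a2) L2dom x)"
proof -
  have L: "L2 a = fL" for a by (rule ext) (simp add: L2_closed fL_def)
  show ?thesis
    unfolding L
  proof (intro conjI ballI impI allI)
    fix x assume "x \<in> L2dom" "x$1 = 0 \<and> x$3 = 0"
    then show "(fL has_derivative (\<lambda>h. 0)) (at x) \<longleftrightarrow> x$4 = pi/2" using crit by blast
  next
    fix x assume x: "x \<in> L2dom" "x$1 = 0 \<and> x$3 = 0 \<and> x$4 = pi/2"
    then have x1: "x$1 = 0" and x3: "x$3 = 0" and x4: "x$4 = pi/2" by auto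
    show "fL x = 1/2" using fL_slice[OF x1 x3] unfolding x4 by simp
    show "\<exists>H. has_hessian fL H x \<and> transpose H = H
             \<and> (\<forall>t::real. det (t *\<^sub>R mat 1 - H) =
                   t^2 * (t + 1) * (t + (1 + cos (x$2)) / 2) * (t + (1 - cos (x$2)) / 2))
             \<and> neg_semidef H \<and> \<not> neg_def H \<and> det H = 0"
      by (rule exI[of _ "Hm (x$2)"]) (simp add: hess[OF x1 x3 x4] Hm_sym Hm_char Hm_nsd Hm_not_nd Hm_det)
    show "1/2 < 3/50 * (9 + sqrt (6::real))" by (rule six)
    show "second_order_trap fL L2dom x" by (rule trap[OF x(1) x1 x3 x4])
  qed simp
qed

end
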